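(* As $s\to 1^+$ (real $s$), $$\lim_{s\to1^+}(s-1)\prod_{p\equiv 1,4 \pmod 5}\left(1-\frac{1}{p^s}\right)^{-2}=\frac{\sqrt5\,\ln(9+4\sqrt5)}{3\pi^2}\prod_{p\equiv 1,4\pmod 5}\left(1-\frac{1}{p^2}\right)^{-1},$$ where the products are over primes $p$ congruent to $1$ or $4$ modulo $5$. *)

theory Defs
  imports "HOL-Analysis.Analysis" "HOL-Computational_Algebra.Primes"
begin

definition P14 :: "nat set" where
  "P14 = {p. prime p \<and> (p mod 5 = 1 \<or> p mod 5 = 4)}"

definition prod_P14 :: "(nat \<Rightarrow> real) \<Rightarrow> real" where
  "prod_P14 g = (\<Prod>n. if n \<in> P14 then g n else 1)"

end

theory Submission
  imports Defs
begin

lemma mvt_powr_bounds: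
  fixes s a b :: real
  assumes s: "s > 1" and ab: "0 < a" "a < b"
  shows "(b - a) / b powr s \<le> (a powr (1 - s) - b powr (1 - s)) / (s - 1)"
    and "(a powr (1 - s) - b powr (1 - s)) / (s - 1) \<le> (b - a) / a powr s"
proof -
  have der: "\<And>x. a \<le> x \<Longrightarrow> x \<le> b \<Longrightarrow> DERIV (\<lambda>x. x powr (1 - s)) x :> (1 - s) * x powr (1 - s - 1)"
    using ab by (intro has_real_derivative_powr) auto   
  obtain z where z: "a < z" "z < b" "b powr (1 - s) - a powr (1 - s) = (b - a) * ((1 - s) * z powr (1 - s - 1))"
    using MVT2[OF ab(2) der] by blast
  have e: "(a powr (1 - s) - b powr (1 - s)) / (s - 1) = (b - a) / z powr s"
  proof -
    have "z powr (1 - s - 1) = 1 / z powr s" by (simp add: powr_minus_divide)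
    moreover have "z powr s > 0" using z ab by simp
    ultimately have "a powr (1 - s) - b powr (1 - s) = (b - a) * (s - 1) / z powr s" using z(3) by (simp add: field_simps)
    thus ?thesis using s by simp
  qed
  have "z powr s \<le> b powr s" "a powr s \<le> z powr s" using z ab s by (auto intro!: powr_mono2)
  moreover have "a powr s > 0" using ab by simp
  ultimately show "(b - a) / b powr s \<le> (a powr (1 - s) - b powr (1 - s)) / (s - 1)"
    "(a powr (1 - s) - b powr (1 - s)) / (s - 1) \<le> (b - a) / a powr s"
    unfolding e using ab z by (auto intro!: divide_left_mono)
qed


definition Z :: "real \<Rightarrow> real" where "Z s = (\<Sum>n. 1 / real n powr s)"

lemma summable_zeta: "s > 1 \<Longrightarrow> summable (\<lambda>n. 1 / real n powr s)"
  using summable_real_powr_iff[of "-s"] by (simp add: powr_minus_divide)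

lemma zeta_bounds:
  assumes s: "s > 1"
  shows "1 / (s - 1) \<le> Z s" "Z s \<le> 1 + 1 / (s - 1)"
proof -
  define g where "g n = real (Suc n) powr (1 - s) / (s - 1)" for n
  have "(\<lambda>n. real (Suc n) powr (1 - s)) \<longlonglongrightarrow> 0"
    using s by (intro tendsto_neg_powr filterlim_compose[OF filterlim_real_sequentially filterlim_Suc]) auto
  hence "g \<longlonglongrightarrow> 0 / (s - 1)" unfolding g_def using s by (intro tendsto_divide) auto
  hence tel: "(\<lambda>n. g n - g (Suc n)) sums (1 / (s - 1))"
    using telescope_sums'[of g 0] by (simp add: g_def)
  have t: "g n - g (Suc n) = (real (Suc n) powr (1 - s) - real (Suc (Suc n)) powr (1 - s)) / (s - 1)" for n
    unfolding g_def by (simp add: diff_divide_distrib)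
  have lo: "1 / real (Suc (Suc n)) powr s \<le> g n - g (Suc n)" for n
    using mvt_powr_bounds(1)[OF s, of "real (Suc n)" "real (Suc (Suc n))"] unfolding t by simp
  have hi: "g n - g (Suc n) \<le> 1 / real (Suc n) powr s" for n
    using mvt_powr_bounds(2)[OF s, of "real (Suc n)" "real (Suc (Suc n))"] unfolding t by simp
  have sz: "summable (\<lambda>n. 1 / real n powr s)" using summable_zeta[OF s] .
  have s1: "summable (\<lambda>n. 1 / real (Suc n) powr s)"
    using summable_ignore_initial_segment[OF sz, of 1] by simp
  have s2: "summable (\<lambda>n. 1 / real (Suc (Suc n)) powr s)"
    using summable_ignore_initial_segment[OF sz, of 2] by (simp add: numeral_2_eq_2)
  have Z1: "Z s = (\<Sum>n. 1 / real (Suc n) powr s)"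
    unfolding Z_def using suminf_split_head[OF sz] by simp
  have Z2: "(\<Sum>n. 1 / real (Suc n) powr s) = 1 + (\<Sum>n. 1 / real (Suc (Suc n)) powr s)"
    using suminf_split_head[OF s1] by simp
  show "1 / (s - 1) \<le> Z s"
    unfolding Z1 using sums_le[OF hi tel summable_sums[OF s1]] .
  show "Z s \<le> 1 + 1 / (s - 1)"
    unfolding Z1 Z2 using sums_le[OF lo summable_sums[OF s2] tel] by simp
qed

lemma zeta_limit: "((\<lambda>s. (s - 1) * Z s) \<longlongrightarrow> 1) (at_right 1)"
proof (rule tendsto_sandwich[of "\<lambda>s. 1" _ _ "\<lambda>s. 1 + (s - 1)"])
  have ev: "\<forall>\<^sub>F s in at_right (1::real). s > 1" by (rule eventually_at_right_less)
  show "\<forall>\<^sub>F s in at_right 1. 1 \<le> (s - 1) * Z s"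
    using ev proof (rule eventually_mono)
    fix s :: real assume "s > 1" thus "1 \<le> (s - 1) * Z s"
      using zeta_bounds(1)[of s] by (simp add: field_simps)
  qed
  show "\<forall>\<^sub>F s in at_right 1. (s - 1) * Z s \<le> 1 + (s - 1)"
    using ev proof (rule eventually_mono)
    fix s :: real assume "s > 1" thus "(s - 1) * Z s \<le> 1 + (s - 1)"
      using zeta_bounds(2)[of s] by (simp add: field_simps)
  qed
  show "((\<lambda>s. 1) \<longlongrightarrow> 1) (at_right (1::real))" by simp
  have "((\<lambda>s. 1 + (s - 1)) \<longlongrightarrow> 1 + (1 - 1)) (at_right (1::real))"
    by (intro tendsto_intros)
  thus "((\<lambda>s. 1 + (s - 1)) \<longlongrightarrow> 1) (at_right (1::real))" by simp
qed


lemma geom_has_sum: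
  fixes x :: real assumes "\<bar>x\<bar> < 1"
  shows "((\<lambda>k. x ^ k) has_sum inverse (1 - x)) UNIV"
proof -
  have "summable (\<lambda>n. norm (x ^ n))" using summable_geometric[of "\<bar>x\<bar>"] assms by (simp add: power_abs)
  moreover have "(\<lambda>n. x ^ n) sums inverse (1 - x)" using geometric_sums[of x] assms by (simp add: inverse_eq_divide)
  ultimately show ?thesis by (rule norm_summable_imp_has_sum)
qed

definition smooth :: "nat set \<Rightarrow> nat set" where
  "smooth A = {n. n > 0 \<and> prime_factors n \<subseteq> A}"

lemma bij_smooth:
  assumes "finite A" "\<And>p. p \<in> A \<Longrightarrow> prime p"
  shows "bij_betw (\<lambda>g::nat\<Rightarrow>nat. \<Prod>p\<in>A. p ^ g p) (PiE A (\<lambda>_. UNIV)) (smooth A)"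
proof (rule bij_betwI')
  fix g h :: "nat \<Rightarrow> nat" assume g: "g \<in> PiE A (\<lambda>_. UNIV)" and h: "h \<in> PiE A (\<lambda>_. UNIV)"
  show "((\<Prod>p\<in>A. p ^ g p) = (\<Prod>p\<in>A. p ^ h p)) = (g = h)"
  proof
    assume eq: "(\<Prod>p\<in>A. p ^ g p) = (\<Prod>p\<in>A. p ^ h p)"
    show "g = h"
    proof (rule PiE_ext[OF g h])
      fix q assume q: "q \<in> A"
      have "multiplicity q (\<Prod>p\<in>A. p ^ g p) = multiplicity q (\<Prod>p\<in>A. p ^ h p)" using eq by simp
      thus "g q = h q" using multiplicity_prod_prime_powers[OF assms(1) assms(2) assms(2)[OF q]] q
        by simp
    qed
  qed simp
next
  fix g :: "nat \<Rightarrow> nat" assume g: "g \<in> PiE A (\<lambda>_. UNIV)"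
  have pos: "(\<Prod>p\<in>A. p ^ g p) > 0" using assms prime_gt_0_nat by (intro prod_pos) auto
  have "prime_factors (\<Prod>p\<in>A. p ^ g p) \<subseteq> A"
  proof
    fix q assume q: "q \<in> prime_factors (\<Prod>p\<in>A. p ^ g p)"
    hence qp: "prime q" and "multiplicity q (\<Prod>p\<in>A. p ^ g p) > 0"
      using pos by (auto simp: prime_factors_multiplicity)
    thus "q \<in> A" using multiplicity_prod_prime_powers[OF assms(1) assms(2) qp] by (auto split: if_splits)
  qed
  thus "(\<Prod>p\<in>A. p ^ g p) \<in> smooth A" using pos by (simp add: smooth_def)
next
  fix n assume n: "n \<in> smooth A"
  hence n0: "n > 0" and sub: "prime_factors n \<subseteq> A" by (auto simp: smooth_def)
  define g :: "nat \<Rightarrow> nat" where "g = restrict (\<lambda>p. multiplicity p n) A"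
  have "g \<in> PiE A (\<lambda>_. UNIV)" by (simp add: g_def)
  moreover have "n = (\<Prod>p\<in>A. p ^ g p)"
  proof -
    have "n = (\<Prod>p \<in> prime_factors n. p ^ multiplicity p n)" using prime_factorization_nat[OF n0] .
    also have "\<dots> = (\<Prod>p\<in>A. p ^ multiplicity p n)"
    proof (rule prod.mono_neutral_left[OF assms(1) sub])
      show "\<forall>i\<in>A - prime_factors n. i ^ multiplicity i n = 1"
        using n0 assms(2) by (auto simp: prime_factors_multiplicity)
    qed
    also have "\<dots> = (\<Prod>p\<in>A. p ^ g p)" by (intro prod.cong) (auto simp: g_def)
    finally show ?thesis .
  qed
  ultimately show "\<exists>g\<in>PiE A (\<lambda>_. UNIV). n = (\<Prod>p\<in>A. p ^ g p)" by blast
qed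

lemma cmult_prod:
  fixes f :: "nat \<Rightarrow> real"
  assumes mult: "\<And>m n. f (m * n) = f m * f n" and f1: "f 1 = 1"
  shows "f (\<Prod>x\<in>B. h x) = (\<Prod>x\<in>B. f (h x))"
proof (induction B rule: infinite_finite_induct)
  case (insert x F) thus ?case by (simp add: mult)
qed (use f1 in simp_all)

lemma cmult_power:
  fixes f :: "nat \<Rightarrow> real"
  assumes mult: "\<And>m n. f (m * n) = f m * f n" and f1: "f 1 = 1"
  shows "f (p ^ k) = f p ^ k"
  using f1 by (induction k) (simp_all add: mult)

lemma euler_finite:
  fixes f :: "nat \<Rightarrow> real"
  assumes mult: "\<And>m n. f (m * n) = f m * f n" and f1: "f 1 = 1"
    and fp: "\<And>p. prime p \<Longrightarrow> \<bar>f p\<bar> < 1"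
    and fin: "finite A" and pr: "\<And>p. p \<in> A \<Longrightarrow> prime p"
  shows "(\<Prod>p\<in>A. inverse (1 - f p)) = infsum f (smooth A)"
proof -
  have "(\<Prod>p\<in>A. inverse (1 - f p)) = (\<Prod>p\<in>A. infsum (\<lambda>k. f p ^ k) UNIV)"
    using geom_has_sum fp pr by (intro prod.cong refl) (metis infsumI)
  also have "\<dots> = infsum (\<lambda>g. \<Prod>p\<in>A. f p ^ g p) (PiE A (\<lambda>_. UNIV))"
  proof (rule infsum_prod_PiE_abs[of A "\<lambda>p k. f p ^ k" "\<lambda>_. UNIV", symmetric, OF fin])
    fix p assume "p \<in> A"
    hence "\<bar>f p\<bar> < 1" using fp pr by auto
    hence "summable (\<lambda>k. norm (f p ^ k))"
      using summable_geometric[of "\<bar>f p\<bar>"] by (simp add: power_abs)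
    thus "(\<lambda>k. norm (f p ^ k)) summable_on UNIV"
      by (subst summable_on_UNIV_nonneg_real_iff) auto
  qed
  also have "\<dots> = infsum (\<lambda>g. f (\<Prod>p\<in>A. p ^ g p)) (PiE A (\<lambda>_. UNIV))"
    by (simp add: cmult_prod[OF mult f1] cmult_power[OF mult f1])
  also have "\<dots> = infsum f (smooth A)"
    by (rule infsum_reindex_bij_betw[OF bij_smooth[OF fin pr]])
  finally show ?thesis .
qed

lemma exp_le_inv_factor:
  fixes x :: real assumes "\<bar>x\<bar> < 1"
  shows "exp (- \<bar>x\<bar>) \<le> inverse (1 - x)"
proof (cases "x \<ge> 0")
  case True
  have "exp (- \<bar>x\<bar>) \<le> 1" by simp
  also have "1 \<le> inverse (1 - x)" using True assms by (simp add: field_simps)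
  finally show ?thesis .
next
  case False
  have "1 + \<bar>x\<bar> \<le> exp \<bar>x\<bar>" by (rule exp_ge_add_one_self)
  hence "inverse (exp \<bar>x\<bar>) \<le> inverse (1 + \<bar>x\<bar>)" by (intro le_imp_inverse_le) auto
  thus ?thesis using False by (simp add: exp_minus)
qed

lemma euler_product:
  fixes f :: "nat \<Rightarrow> real"
  assumes mult: "\<And>m n. f (m * n) = f m * f n" and f1: "f 1 = 1"
    and fp: "\<And>p. prime p \<Longrightarrow> \<bar>f p\<bar> < 1"
    and summ: "summable (\<lambda>n. \<bar>f n\<bar>)"
  shows "(\<lambda>n. if prime n then inverse (1 - f n) else 1) has_prod (\<Sum>n. f n)"
    and "(\<Sum>n. f n) > 0"
proof -
  have f0: "f 0 = 0"
  proof (rule ccontr)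
    assume "f 0 \<noteq> 0"
    moreover have "f 0 = f 0 * f 0" using mult[of 0 0] by simp
    ultimately have "f 0 = 1" by (metis mult_cancel_left1)
    hence "\<And>n. f n = 1" using mult[of 0] by (metis mult_1 mult_zero_left)
    hence "(\<lambda>n. \<bar>f n\<bar>) = (\<lambda>n. 1)" by simp
    with summable_LIMSEQ_zero[OF summ] show False by (simp add: LIMSEQ_const_iff)
  qed
  define fac where "fac n = (if prime n then inverse (1 - f n) else 1)" for n
  define A where "A N = {p. prime p \<and> p \<le> N}" for N :: nat
  define S where "S = (\<Sum>n. \<bar>f n\<bar>)"
  have sf: "summable f" by (rule summable_rabs_cancel[OF summ])
  have hs: "(f has_sum (\<Sum>n. f n)) UNIV"
    using norm_summable_imp_has_sum[of f] summ sf by (simp add: summable_sums)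
  have hsa: "((\<lambda>n. \<bar>f n\<bar>) has_sum S) UNIV"
    using norm_summable_imp_has_sum[of "\<lambda>n. \<bar>f n\<bar>"] summ by (simp add: summable_sums S_def)
  have sumf: "f summable_on UNIV" using hs by (auto simp: summable_on_def)
  have suma: "(\<lambda>n. \<bar>f n\<bar>) summable_on UNIV" using hsa by (auto simp: summable_on_def)
  have P_eq: "(\<Prod>i\<le>N. fac i) = infsum f (smooth (A N))" for N
  proof -
    have "(\<Prod>i\<le>N. fac i) = (\<Prod>p\<in>A N. inverse (1 - f p))"
      unfolding fac_def A_def using prod.inter_filter[of "{..N}" "\<lambda>n. inverse (1 - f n)" prime, symmetric]
      by (simp add: atMost_def conj_commute)
    also have "\<dots> = infsum f (smooth (A N))"
      by (rule euler_finite[OF mult f1 fp]) (auto simp: A_def)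
    finally show ?thesis .
  qed
  have bound: "\<bar>(\<Sum>n. f n) - (\<Prod>i\<le>N. fac i)\<bar> \<le> S - (\<Sum>n\<le>N. \<bar>f n\<bar>)" for N
  proof -
    let ?T = "smooth (A N)"
    have "(\<Sum>n. f n) - infsum f ?T = infsum f (UNIV - ?T)"
      using infsum_Diff[OF sumf summable_on_subset[OF sumf], of ?T] infsumI[OF hs] by simp
    also have "\<bar>\<dots>\<bar> \<le> infsum (\<lambda>n. \<bar>f n\<bar>) (UNIV - ?T)"
      using norm_infsum_bound[of f "UNIV - ?T"] summable_on_subset[OF suma, of "UNIV - ?T"] by simp
    also have "\<dots> \<le> infsum (\<lambda>n. \<bar>f n\<bar>) (- {..N})"
    proof (rule infsum_mono_neutral)
      show "(\<lambda>n. \<bar>f n\<bar>) summable_on UNIV - ?T" "(\<lambda>n. \<bar>f n\<bar>) summable_on - {..N}"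
        by (auto intro: summable_on_subset[OF suma])
      fix x assume x: "x \<in> (UNIV - ?T) - (- {..N})"
      have "x = 0"
      proof (rule ccontr)
        assume "x \<noteq> 0"
        hence "prime_factors x \<subseteq> A N" using x
          by (auto simp: A_def in_prime_factors_iff intro: order.trans[OF dvd_imp_le])
        thus False using x \<open>x \<noteq> 0\<close> by (auto simp: smooth_def)
      qed
      thus "\<bar>f x\<bar> \<le> 0" by (simp add: f0)
    qed auto
    also have "\<dots> = S - (\<Sum>n\<le>N. \<bar>f n\<bar>)"
    proof -
      have "infsum (\<lambda>n. \<bar>f n\<bar>) (UNIV - {..N}) = infsum (\<lambda>n. \<bar>f n\<bar>) UNIV - infsum (\<lambda>n. \<bar>f n\<bar>) {..N}"
        by (rule infsum_Diff[OF suma]) auto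
      thus ?thesis using infsumI[OF hsa] by (simp add: Compl_eq_Diff_UNIV)
    qed
    finally show ?thesis using P_eq by simp
  qed
  have tail: "(\<lambda>N. S - (\<Sum>n\<le>N. \<bar>f n\<bar>)) \<longlonglongrightarrow> 0"
    using tendsto_diff[OF tendsto_const[of S] summable_LIMSEQ'[OF summ]] by (simp add: S_def)
  have lim: "(\<lambda>N. \<Prod>i\<le>N. fac i) \<longlonglongrightarrow> (\<Sum>n. f n)"
  proof -
    have "(\<lambda>N. (\<Sum>n. f n) - (\<Prod>i\<le>N. fac i)) \<longlonglongrightarrow> 0"
      by (rule Lim_null_comparison[OF _ tail]) (use bound in \<open>auto intro: always_eventually\<close>)
    hence "(\<lambda>N. (\<Sum>n. f n) - ((\<Sum>n. f n) - (\<Prod>i\<le>N. fac i))) \<longlonglongrightarrow> (\<Sum>n. f n) - 0"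
      by (intro tendsto_diff tendsto_const)
    thus ?thesis by simp
  qed
  have lower: "exp (- S) \<le> (\<Prod>i\<le>N. fac i)" for N
  proof -
    have "exp (- S) \<le> exp (\<Sum>i\<le>N. - \<bar>f i\<bar>)"
      using sum_le_suminf[OF summ, of "{..N}"] by (simp add: S_def sum_negf)
    also have "\<dots> = (\<Prod>i\<le>N. exp (- \<bar>f i\<bar>))" by (simp add: exp_sum)
    also have "\<dots> \<le> (\<Prod>i\<le>N. fac i)"
      by (intro prod_mono) (auto simp: fac_def exp_le_inv_factor fp)
    finally show ?thesis .
  qed
  have pos: "(\<Sum>n. f n) > 0"
  proof -
    have "exp (- S) \<le> (\<Sum>n. f n)" by (rule LIMSEQ_le_const[OF lim]) (use lower in auto)
    thus ?thesis using exp_gt_zero[of "-S"] by linarith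
  qed
  have nz: "fac i \<noteq> 0" for i using fp[of i] by (auto simp: fac_def)
  have "convergent_prod fac"
    using convergent_prod_iff_nz_lim[of fac] nz lim pos by auto
  hence "fac has_prod (\<Sum>n. f n)"
    by (rule convergent_prod_tendsto_imp_has_prod[OF _ lim])
  moreover have "fac = (\<lambda>n. if prime n then inverse (1 - f n) else 1)" by (simp add: fac_def fun_eq_iff)
  ultimately show "(\<lambda>n. if prime n then inverse (1 - f n) else 1) has_prod (\<Sum>n. f n)" by simp
  show "(\<Sum>n. f n) > 0" by (rule pos)
qed


definition chi :: "nat \<Rightarrow> real" where
  "chi n = (if n mod 5 = 1 \<or> n mod 5 = 4 then 1 else if n mod 5 = 2 \<or> n mod 5 = 3 then -1 else 0)"

lemma chi_mult: "chi (m * n) = chi m * chi n"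
proof -
  have e: "(m * n) mod 5 = ((m mod 5) * (n mod 5)) mod 5" by (simp add: mod_mult_eq)
  define a where "a = m mod 5"
  define b where "b = n mod 5"
  have "a < 5" "b < 5" by (auto simp: a_def b_def)
  hence "a \<in> {0,1,2,3,4}" "b \<in> {0,1,2,3,4}" by auto
  hence "(if (a*b) mod 5 = 1 \<or> (a*b) mod 5 = 4 then 1 else if (a*b) mod 5 = 2 \<or> (a*b) mod 5 = 3 then -1 else 0 :: real)
     = (if a = 1 \<or> a = 4 then 1 else if a = 2 \<or> a = 3 then -1 else 0) *
       (if b = 1 \<or> b = 4 then 1 else if b = 2 \<or> b = 3 then -1 else 0)"
    by (elim insertE emptyE) simp_all
  thus ?thesis unfolding chi_def e a_def b_def .
qed

lemma chi_period: "chi (5*k + j) = chi j"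
proof -
  have e: "(5*k+j) mod 5 = j mod 5" by presburger
  show ?thesis unfolding chi_def by (simp only: e)
qed

lemma chi_abs: "\<bar>chi n\<bar> \<le> 1" by (simp add: chi_def)

definition gblk :: "nat \<Rightarrow> real \<Rightarrow> real" where
  "gblk k s = 1 / real (5*k+1) powr s - 1 / real (5*k+2) powr s - 1 / real (5*k+3) powr s + 1 / real (5*k+4) powr s"

lemma block_sum:
  "(\<Sum>n\<in>{k*5..<k*5+5}. chi n * (1 / real n powr s)) = gblk k s"
proof -
  have "{k*5..<k*5+5} = {5*k, 5*k+1, 5*k+2, 5*k+3, 5*k+4}" by auto
  moreover have "chi (5*k) = 0" "chi (5*k+1) = 1" "chi (5*k+2) = -1" "chi (5*k+3) = -1" "chi (5*k+4) = 1"
    using chi_period[of k 0] chi_period[of k 1] chi_period[of k 2] chi_period[of k 3] chi_period[of k 4]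
    by (simp_all add: chi_def del: One_nat_def)
  ultimately show ?thesis by (simp add: gblk_def)
qed

definition Lf :: "real \<Rightarrow> real" where "Lf s = (\<Sum>n. chi n * (1 / real n powr s))"

lemma chi_term_bound: "norm \<bar>chi n * (1 / real n powr s)\<bar> \<le> 1 / real n powr s" for n
  proof -
    have nn: "0 \<le> 1 / real n powr s" by simp
    have "\<bar>chi n\<bar> * (1 / real n powr s) \<le> 1 * (1 / real n powr s)"
      by (rule mult_right_mono[OF chi_abs nn])
    thus ?thesis using nn by (simp only: real_norm_def abs_abs abs_mult abs_of_nonneg mult_1)
  qed
lemma summable_L: "s > 1 \<Longrightarrow> summable (\<lambda>n. \<bar>chi n * (1 / real n powr s)\<bar>)"
proof -
  assume s: "s > 1"
  have sz: "summable (\<lambda>n. 1 / real n powr s)"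
    using summable_real_powr_iff[of "-s"] s by (simp add: powr_minus_divide)
  show ?thesis by (rule summable_comparison_test'[OF sz chi_term_bound])
qed

lemma L_eq_blocks: "s > 1 \<Longrightarrow> (\<lambda>k. gblk k s) sums Lf s"
proof -
  assume s: "s > 1"
  have "summable (\<lambda>n. chi n * (1 / real n powr s))"
    by (rule summable_rabs_cancel[OF summable_L[OF s]])
  hence "(\<lambda>n. chi n * (1 / real n powr s)) sums Lf s" unfolding Lf_def by (rule summable_sums)
  from sums_group[OF this, of 5] show ?thesis unfolding block_sum by simp
qed

lemma diff_inv_powr:
  fixes t a b :: real assumes t: "t > 0" and ab: "0 < a" "a < b"
  shows "t * (b - a) / b powr (t + 1) \<le> 1 / a powr t - 1 / b powr t"
    and "1 / a powr t - 1 / b powr t \<le> t * (b - a) / a powr (t + 1)"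
proof -
  have e: "x powr (1 - (t + 1)) = 1 / x powr t" for x :: real by (simp add: powr_minus_divide)
  have "t + 1 > 1" using t by simp
  note m = mvt_powr_bounds[OF this ab]
  have tt: "t * (X / t) = X" for X using t by simp
  show "t * (b - a) / b powr (t + 1) \<le> 1 / a powr t - 1 / b powr t"
    using mult_left_mono[OF m(1), of t] t unfolding e tt by simp
  show "1 / a powr t - 1 / b powr t \<le> t * (b - a) / a powr (t + 1)"
    using mult_left_mono[OF m(2), of t] t unfolding e tt by simp
qed

lemma gblk_bounds:
  assumes s: "1 \<le> s" "s \<le> 2"
  shows "0 \<le> gblk k s" "gblk k s \<le> 18 / real (Suc k) ^ 2"
proof -
  define a where "a = real (5*k+1)"
  have a1: "a \<ge> 1" by (simp add: a_def)
  have ga: "gblk k s = (1 / a powr s - 1 / (a+1) powr s) - (1 / (a+2) powr s - 1 / (a+3) powr s)"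
    by (simp add: gblk_def a_def add_ac)
  have sp: "s > 0" using s by simp
  note d1 = diff_inv_powr[OF sp, of a "a+1"] and d2 = diff_inv_powr[OF sp, of "a+2" "a+3"]
  have "s / (a+2) powr (s+1) \<le> s / (a+1) powr (s+1)"
    using a1 sp by (intro divide_left_mono powr_mono2 mult_pos_pos) auto
  thus "0 \<le> gblk k s" unfolding ga using d1 d2 a1 by simp
  have "gblk k s \<le> s / a powr (s+1) - s / (a+3) powr (s+1)"
    unfolding ga using d1 d2 a1 by simp
  also have "\<dots> = s * (1 / a powr (s+1) - 1 / (a+3) powr (s+1))" by (simp add: field_simps)
  also have "\<dots> \<le> s * ((s+1) * 3 / a powr (s+1+1))"
    using diff_inv_powr(2)[of "s+1" a "a+3"] a1 sp by (intro mult_left_mono) auto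
  also have "\<dots> \<le> 2 * (3 * 3 / a powr 3)"
  proof (intro mult_mono)
    have "a powr 3 \<le> a powr (s+1+1)" using a1 s by (intro powr_mono) auto
    hence "1 / a powr (s+1+1) \<le> 1 / a powr 3" using a1 by (intro divide_left_mono) auto
    thus "(s + 1) * 3 / a powr (s + 1 + 1) \<le> 3 * 3 / a powr 3"
      using s a1 by (simp add: divide_inverse mult_mono)
  qed (use s a1 in auto)
  also have "\<dots> = 18 / a ^ 3" using a1 by (simp add: powr_realpow)
  also have "\<dots> \<le> 18 / real (Suc k) ^ 2"
  proof -
    have "real (Suc k) ^ 2 \<le> a ^ 2" unfolding a_def by (intro power_mono) auto
    also have "a ^ 2 \<le> a ^ 3" using a1 by (intro power_increasing) auto
    finally have "real (Suc k) ^ 2 \<le> a ^ 3" .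
    moreover have "0 < real (Suc k) ^ 2" by simp
    ultimately show ?thesis using a1 by (intro divide_left_mono) auto
  qed
  finally show "gblk k s \<le> 18 / real (Suc k) ^ 2" .
qed

lemma cont_inv_powr: "c > 0 \<Longrightarrow> continuous_on A (\<lambda>x::real. 1 / c powr x)"
  by (intro continuous_intros) auto

lemma cont_gblk: "continuous_on A (gblk i)"
  unfolding gblk_def[abs_def]
  by (intro continuous_on_add continuous_on_diff cont_inv_powr) auto

definition G :: "real \<Rightarrow> real" where "G s = (\<Sum>k. gblk k s)"

lemma summable_M: "summable (\<lambda>k. 18 / real (Suc k) ^ 2)"
proof -
  have "summable (\<lambda>n. 1 / real ((n + 1)^2))" using inverse_squares_sums by (rule sums_summable)
  hence "summable (\<lambda>n. 18 * (1 / real ((n + 1)^2)))" by (rule summable_mult)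
  thus ?thesis by simp
qed

lemma G_tendsto: "(G \<longlongrightarrow> G 1) (at_right 1)"
proof -
  have ul: "uniform_limit {1..2} (\<lambda>n s. \<Sum>i<n. gblk i s) (\<lambda>s. suminf (\<lambda>i. gblk i s)) sequentially"
  proof (rule Weierstrass_m_test[OF _ summable_M])
    fix n and s :: real assume "s \<in> {1..2}"
    thus "norm (gblk n s) \<le> 18 / real (Suc n) ^ 2" using gblk_bounds[of s n] by auto
  qed
  have c: "\<forall>\<^sub>F n in sequentially. continuous_on {1..2} (\<lambda>s. \<Sum>i<n. gblk i s)"
    by (intro always_eventually allI continuous_on_sum cont_gblk)
  have "continuous_on {1..2} (\<lambda>s. suminf (\<lambda>i. gblk i s))"
    by (rule uniform_limit_theorem[OF c ul]) simp
  hence "continuous_on {1..2} G" by (simp add: G_def[abs_def])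
  hence "(G \<longlongrightarrow> G 1) (at 1 within {1..2})" by (simp add: continuous_on_def)
  thus ?thesis using at_within_Icc_at_right[of "1::real" 2] by simp
qed


lemma frac_identity:
  fixes a b x r :: real
  assumes ab: "a + b = 1" "a * b = -1" "a - b = r"
    and qa: "x^2 + a*x + 1 \<noteq> 0" and qb: "x^2 + b*x + 1 \<noteq> 0"
  shows "(2*x + a) / (x^2 + a*x + 1) - (2*x + b) / (x^2 + b*x + 1) = r * (1 - x^2) / (1 + x + x^2 + x^3 + x^4)"
proof -
  have p: "(x^2 + a*x + 1) * (x^2 + b*x + 1) = x^4 + (a+b)*x^3 + (2+a*b)*x^2 + (a+b)*x + 1"
    by (simp add: algebra_simps power2_eq_square power3_eq_cube power4_eq_xxxx)
  hence p': "(x^2 + a*x + 1) * (x^2 + b*x + 1) = 1 + x + x^2 + x^3 + x^4" using ab by simp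
  have n: "(2*x + a) * (x^2 + b*x + 1) - (2*x + b) * (x^2 + a*x + 1) = (a - b) * (1 - x^2)"
    by (simp add: algebra_simps power2_eq_square)
  have "(2*x + a) / (x^2 + a*x + 1) - (2*x + b) / (x^2 + b*x + 1)
      = ((2*x + a) * (x^2 + b*x + 1) - (2*x + b) * (x^2 + a*x + 1)) / ((x^2 + a*x + 1) * (x^2 + b*x + 1))"
    using qa qb by (simp add: diff_frac_eq)
  also have "\<dots> = r * (1 - x^2) / (1 + x + x^2 + x^3 + x^4)" unfolding n p' using ab by simp
  finally show ?thesis .
qed

definition phi1 :: real where "phi1 = (1 + sqrt 5) / 2"
definition phi2 :: real where "phi2 = (1 - sqrt 5) / 2"

lemma sqrt5_sq: "sqrt 5 * sqrt 5 = (5::real)" by simp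
lemma sqrt5_le3: "sqrt 5 \<le> (3::real)"
  using real_sqrt_le_mono[of 5 9] by (simp add: real_sqrt_eq_iff)
lemma sqrt5_pos: "sqrt 5 > (0::real)" by simp
lemma phi_facts: "phi1 + phi2 = 1" "phi1 * phi2 = -1" "phi1 - phi2 = sqrt 5" "phi1 > 0" "phi2 \<ge> -1"
proof -
  show "phi1 + phi2 = 1" "phi1 - phi2 = sqrt 5" by (simp_all add: phi1_def phi2_def field_simps)
  show "phi1 * phi2 = -1" unfolding phi1_def phi2_def using sqrt5_sq by (simp add: field_simps algebra_simps)
  have "0 < 1 + sqrt (5::real)" using sqrt5_pos by linarith
  thus "phi1 > 0" unfolding phi1_def by simp
  have "-2 \<le> 1 - sqrt (5::real)" using sqrt5_le3 by linarith
  thus "phi2 \<ge> -1" unfolding phi2_def by simp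
qed

lemma Qa_pos: "x \<ge> 0 \<Longrightarrow> x^2 + phi1 * x + 1 > (0::real)"
proof -
  assume x: "x \<ge> 0"
  have "0 \<le> phi1 * x" using phi_facts(4) x by simp
  moreover have "0 \<le> x^2" by simp
  ultimately show ?thesis by linarith
qed

lemma Qb_pos: "x \<ge> 0 \<Longrightarrow> x^2 + phi2 * x + 1 > (0::real)"
proof -
  assume x: "x \<ge> 0"
  have "phi2 * x \<ge> -x" using phi_facts(5) x by (metis mult_minus_left mult_1 mult_right_mono)
  moreover have "x^2 - x + 1 > 0"
  proof -
    have "x^2 - x + 1 = (x - 1/2)^2 + 3/4" by (simp add: power2_eq_square algebra_simps)
    moreover have "(x - 1/2)^2 \<ge> 0" by simp
    ultimately show ?thesis by linarith
  qed
  ultimately show ?thesis by linarith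
qed

definition hfun :: "real \<Rightarrow> real" where "hfun x = (1 - x^2) / (1 + x + x^2 + x^3 + x^4)"

definition Afun :: "real \<Rightarrow> real" where
  "Afun x = (ln (x^2 + phi1 * x + 1) - ln (x^2 + phi2 * x + 1)) / sqrt 5"

lemma Afun_deriv:
  assumes x: "x \<ge> 0"
  shows "DERIV Afun x :> hfun x"
proof -
  have qa: "x^2 + phi1 * x + 1 > 0" and qb: "x^2 + phi2 * x + 1 > 0" using Qa_pos Qb_pos x by auto
  have dq: "DERIV (\<lambda>x. x^2 + c * x + 1) x :> 2 * x + c" for c :: real
    by (auto intro!: derivative_eq_intros)
  have dl: "DERIV (\<lambda>x. ln (x^2 + c * x + 1)) x :> (2 * x + c) / (x^2 + c * x + 1)"
    if "x^2 + c * x + 1 > 0" for c :: real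
    using DERIV_chain2[OF DERIV_ln_divide[OF that] dq[of c]] by simp
  have "DERIV Afun x :> ((2*x + phi1) / (x^2 + phi1 * x + 1) - (2*x + phi2) / (x^2 + phi2 * x + 1)) / sqrt 5"
    unfolding Afun_def[abs_def] by (intro DERIV_cdivide DERIV_diff dl qa qb)
  also have "((2*x + phi1) / (x^2 + phi1 * x + 1) - (2*x + phi2) / (x^2 + phi2 * x + 1)) = sqrt 5 * (1 - x^2) / (1 + x + x^2 + x^3 + x^4)"
    by (rule frac_identity[OF phi_facts(1-3)]) (use qa qb in auto)
  finally show ?thesis by (simp add: hfun_def)
qed

definition PK :: "nat \<Rightarrow> real \<Rightarrow> real" where
  "PK K x = (\<Sum>k<K. x^(5*k+1) / real (5*k+1) - x^(5*k+2) / real (5*k+2) - x^(5*k+3) / real (5*k+3) + x^(5*k+4) / real (5*k+4))"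

definition DK :: "nat \<Rightarrow> real \<Rightarrow> real" where
  "DK K x = (\<Sum>k<K. x^(5*k) - x^(5*k+1) - x^(5*k+2) + x^(5*k+3))"

lemma deriv_mono_term: "DERIV (\<lambda>x::real. x^(Suc m) / real (Suc m)) x :> x^m"
proof -
  have "DERIV (\<lambda>x::real. x^(Suc m) / real (Suc m)) x :> real (Suc m) * x ^ (Suc m - Suc 0) / real (Suc m)"
    by (intro DERIV_cdivide DERIV_pow)
  thus ?thesis by (simp del: of_nat_Suc)
qed

lemma term_deriv: "DERIV (\<lambda>x::real. x^(Suc (5*k)) / real (Suc (5*k)) - x^(Suc (5*k+1)) / real (Suc (5*k+1))
     - x^(Suc (5*k+2)) / real (Suc (5*k+2)) + x^(Suc (5*k+3)) / real (Suc (5*k+3))) x :>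
     x^(5*k) - x^(5*k+1) - x^(5*k+2) + x^(5*k+3)"
  by (intro DERIV_add DERIV_diff deriv_mono_term)

lemma PK_deriv: "DERIV (PK K) x :> DK K x"
  unfolding PK_def[abs_def] DK_def
proof (rule DERIV_sum)
  fix k
  have four: "(4::nat) = Suc (Suc (Suc (Suc 0)))" by simp
  have e: "(\<lambda>x::real. x^(5*k+1) / real (5*k+1) - x^(5*k+2) / real (5*k+2) - x^(5*k+3) / real (5*k+3) + x^(5*k+4) / real (5*k+4))
    = (\<lambda>x::real. x^(Suc (5*k)) / real (Suc (5*k)) - x^(Suc (5*k+1)) / real (Suc (5*k+1))
     - x^(Suc (5*k+2)) / real (Suc (5*k+2)) + x^(Suc (5*k+3)) / real (Suc (5*k+3)))"
    by (simp only: add_Suc_right add_0_right numeral_2_eq_2 numeral_3_eq_3 One_nat_def four)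
  show "DERIV (\<lambda>x. x^(5*k+1) / real (5*k+1) - x^(5*k+2) / real (5*k+2) - x^(5*k+3) / real (5*k+3) + x^(5*k+4) / real (5*k+4)) x :>
     x^(5*k) - x^(5*k+1) - x^(5*k+2) + x^(5*k+3)"
    unfolding e by (rule term_deriv)
qed

lemma DK_identity: "DK K x * (1 + x + x^2 + x^3 + x^4) = (1 - x^(5*K)) * (1 - x^2)"
proof (induction K)
  case 0 thus ?case by (simp add: DK_def)
next
  case (Suc K)
  define y where "y = x^(5*K)"
  have d: "x^(5*K) - x^(5*K+1) - x^(5*K+2) + x^(5*K+3) = y * (1 - x - x^2 + x^3)"
    by (simp add: power_add algebra_simps power2_eq_square power3_eq_cube y_def)
  have sD: "DK (Suc K) x = DK K x + y * (1 - x - x^2 + x^3)" unfolding d[symmetric] by (simp add: DK_def)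
  have c: "(1 - x - x^2 + x^3) * (1 + x + x^2 + x^3 + x^4) = (1 - x^5) * (1 - x^2)"
    by algebra
  have p: "x^(5 * Suc K) = y * x^5" by (simp add: y_def power_add)
  have "DK (Suc K) x * (1 + x + x^2 + x^3 + x^4) = DK K x * (1 + x + x^2 + x^3 + x^4) + y * ((1 - x - x^2 + x^3) * (1 + x + x^2 + x^3 + x^4))"
    unfolding sD by (simp only: distrib_right mult.assoc)
  also have "\<dots> = (1 - y) * (1 - x^2) + y * ((1 - x^5) * (1 - x^2))" unfolding c Suc y_def ..
  also have "\<dots> = (1 - y * x^5) * (1 - x^2)" by algebra
  finally show ?case unfolding p .
qed

lemma DK_eq: "x \<ge> 0 \<Longrightarrow> DK K x = (1 - x^(5*K)) * hfun x"
proof -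
  assume x: "x \<ge> 0"
  have "1 + x + x^2 + x^3 + x^4 > 0" using x by (intro add_pos_nonneg) auto
  thus ?thesis using DK_identity[of K x] unfolding hfun_def by (simp add: field_simps)
qed

lemma hfun_bounds: "0 \<le> x \<Longrightarrow> x \<le> 1 \<Longrightarrow> 0 \<le> hfun x \<and> hfun x \<le> 1"
proof -
  assume x: "0 \<le> x" "x \<le> 1"
  have d: "1 + x + x^2 + x^3 + x^4 > 0" using x by (intro add_pos_nonneg) auto
  have "x^2 \<le> 1" using x by (simp add: power_le_one)
  moreover have "1 - x^2 \<le> 1 + x + x^2 + x^3 + x^4" using x by simp
  ultimately show ?thesis using d unfolding hfun_def by (simp add: divide_le_eq_1)
qed

lemma partial_bound:
  "0 \<le> (Afun 1 - PK K 1) - (Afun 0 - PK K 0) \<and> (Afun 1 - PK K 1) - (Afun 0 - PK K 0) \<le> 1 / real (5*K+1)"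
proof -
  define B where "B x = Afun x - PK K x" for x
  have dB: "DERIV B x :> x^(5*K) * hfun x" if "x \<ge> 0" for x
  proof -
    have "DERIV B x :> hfun x - DK K x" unfolding B_def[abs_def]
      by (intro DERIV_diff Afun_deriv PK_deriv that)
    moreover have "hfun x - DK K x = x^(5*K) * hfun x" using DK_eq[OF that] by (simp add: algebra_simps)
    ultimately show ?thesis by simp
  qed
  have "B 0 \<le> B 1"
  proof (rule DERIV_nonneg_imp_nondecreasing[of 0 1 B])
    fix x :: real assume "0 \<le> x" "x \<le> 1"
    thus "\<exists>y. DERIV B x :> y \<and> y \<ge> 0" using dB hfun_bounds by (intro exI[of _ "x^(5*K) * hfun x"]) auto
  qed simp
  moreover
  define C where "C x = x^(Suc (5*K)) / real (Suc (5*K)) - B x" for x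
  have "C 0 \<le> C 1"
  proof (rule DERIV_nonneg_imp_nondecreasing[of 0 1 C])
    fix x :: real assume x: "0 \<le> x" "x \<le> 1"
    have "DERIV C x :> x^(5*K) - x^(5*K) * hfun x" unfolding C_def[abs_def]
      by (intro DERIV_diff deriv_mono_term dB x)
    moreover have "x^(5*K) * hfun x \<le> x^(5*K) * 1" using hfun_bounds[OF x] x by (intro mult_left_mono) auto
    ultimately show "\<exists>y. DERIV C x :> y \<and> y \<ge> 0" by (intro exI[of _ "x^(5*K) - x^(5*K) * hfun x"]) auto
  qed simp
  moreover have "C 0 = - B 0" by (simp add: C_def)
  moreover have "C 1 = 1 / real (5*K+1) - B 1" by (simp add: C_def)
  ultimately show ?thesis unfolding B_def by linarith
qed

lemma Afun_0: "Afun 0 = 0" by (simp add: Afun_def)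
lemma PK_0: "PK K 0 = 0" by (simp add: PK_def zero_power)
lemma PK_1: "PK K 1 = (\<Sum>k<K. gblk k 1)" by (simp add: PK_def gblk_def)

lemma G1_sums: "(\<lambda>k. gblk k 1) sums Afun 1"
  unfolding sums_def
proof -
  have b: "\<bar>(\<Sum>k<K. gblk k 1) - Afun 1\<bar> \<le> inverse (real (Suc K))" for K
  proof -
    have "1 / real (5*K+1) \<le> inverse (real (Suc K))" by (simp add: divide_simps)
    thus ?thesis using partial_bound[of K] by (simp add: Afun_0 PK_0 PK_1)
  qed
  have "(\<lambda>K. (\<Sum>k<K. gblk k 1) - Afun 1) \<longlonglongrightarrow> 0"
    by (rule Lim_null_comparison[OF _ LIMSEQ_inverse_real_of_nat]) (use b in \<open>auto intro: always_eventually\<close>)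
  thus "(\<lambda>K. \<Sum>k<K. gblk k 1) \<longlonglongrightarrow> Afun 1" by (simp add: LIM_zero_iff)
qed

lemma Afun_1: "Afun 1 = ln ((3 + sqrt 5) / 2) / sqrt 5"
proof -
  have p1: "2 + phi1 > 0" "2 + phi2 > 0" using phi_facts by auto
  have "Afun 1 = (ln (2 + phi1) - ln (2 + phi2)) / sqrt 5" by (simp add: Afun_def add_ac)
  also have "ln (2 + phi1) - ln (2 + phi2) = ln ((2 + phi1) / (2 + phi2))" using p1 by (simp add: ln_div)
  also have "(2 + phi1) / (2 + phi2) = (3 + sqrt 5) / 2"
    using p1 sqrt5_sq by (simp add: phi1_def phi2_def field_simps)
  finally show ?thesis .
qed

lemma G_1: "G 1 = ln ((3 + sqrt 5) / 2) / sqrt 5"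
  using G1_sums Afun_1 unfolding G_def by (simp add: sums_iff)


lemma inv1_bound: "0 \<le> x \<Longrightarrow> x \<le> 1/2 \<Longrightarrow> 0 \<le> inverse (1 - x) - 1 \<and> inverse (1 - x) - 1 \<le> 2 * (x::real)"
proof -
  assume x: "0 \<le> x" "x \<le> 1/2"
  have "inverse (1 - x) - 1 = x / (1 - x)" using x by (simp add: field_simps)
  moreover have "x / (1 - x) \<le> 2 * x"
  proof -
    have "x * (2 * x) \<le> x * 1" using x by (intro mult_left_mono) auto
    moreover have "(2 * x) * (1 - x) = 2 * x - 2 * (x * x)" "x * (2 * x) = 2 * (x * x)" by algebra+
    ultimately have xx: "x \<le> (2 * x) * (1 - x)" by linarith
    have p: "0 < 1 - x" using x by simp
    have "x / (1 - x) \<le> ((2 * x) * (1 - x)) / (1 - x)" by (rule divide_right_mono[OF xx]) (use p in simp)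
    also have "((2 * x) * (1 - x)) / (1 - x) = 2 * x" using p by simp
    finally show ?thesis .
  qed
  moreover have "0 \<le> x / (1 - x)" using x by simp
  ultimately show ?thesis by simp
qed

lemma inv2_bound: "0 \<le> x \<Longrightarrow> x \<le> 1/2 \<Longrightarrow> 0 \<le> inverse ((1 - x)^2) - 1 \<and> inverse ((1 - x)^2) - 1 \<le> 8 * (x::real)"
proof -
  assume x: "0 \<le> x" "x \<le> 1/2"
  have "1/2 \<le> 1 - x" using x by simp
  hence "(1/2)^2 \<le> (1 - x)^2" by (intro power_mono) auto
  hence q: "(1 - x)^2 \<ge> 1/4" by (simp add: power2_eq_square)
  have "inverse ((1 - x)^2) - 1 = (2*x - x^2) / (1 - x)^2" using x q by (simp add: field_simps power2_eq_square)
  moreover have "(2*x - x^2) / (1 - x)^2 \<le> 8 * x"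
  proof -
    have "2*x - x^2 \<le> 2 * x" using zero_le_power2[of x] by linarith
    also have "2 * x \<le> 8 * x * (1 - x)^2"
    proof -
      have "(8 * x) * (1/4) \<le> (8 * x) * (1 - x)^2" using q x by (intro mult_left_mono) auto
      thus ?thesis by simp
    qed
    finally show ?thesis using q by (simp add: divide_le_eq)
  qed
  moreover have "0 \<le> (2*x - x^2) / (1 - x)^2"
  proof -
    have "x * x \<le> 2 * x" using mult_right_mono[of x 2 x] x by simp
    hence "0 \<le> 2*x - x^2" by (simp add: power2_eq_square)
    thus ?thesis by simp
  qed
  ultimately show ?thesis by simp
qed

lemma conv_prod_bound:
  fixes a M :: "nat \<Rightarrow> real"
  assumes "\<And>n. 0 \<le> a n - 1" "\<And>n. a n - 1 \<le> M n" "summable M"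
  shows "convergent_prod a"
proof -
  have "summable (\<lambda>n. \<bar>a n - 1\<bar>)"
  proof (rule summable_comparison_test'[OF assms(3)])
    fix n show "norm \<bar>a n - 1\<bar> \<le> M n" using assms(1,2)[of n] by simp
  qed
  hence "convergent_prod (\<lambda>n. 1 + (a n - 1))"
  proof (rule summable_imp_convergent_prod_real)
    fix k show "a k - 1 \<noteq> -1" using assms(1)[of k] by linarith
  qed
  thus ?thesis by simp
qed

lemma inv_powr_le_half: "prime (n::nat) \<Longrightarrow> s \<ge> 1 \<Longrightarrow> 1 / real n powr s \<le> 1 / real n \<and> 1 / real n \<le> 1/2"
proof -
  assume p: "prime n" and s: "s \<ge> 1"
  have n2: "real n \<ge> 2" using prime_ge_2_nat[OF p] by simp
  have "real n powr 1 \<le> real n powr s" using n2 s by (intro powr_mono) auto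
  hence "1 / real n powr s \<le> 1 / real n" using n2 by (intro divide_left_mono) auto
  thus ?thesis using n2 by simp
qed

lemma inv_powr_half: "prime (n::nat) \<Longrightarrow> s \<ge> 1 \<Longrightarrow> 1 / real n powr s \<le> 1/2"
proof -
  assume a: "prime n" "s \<ge> 1"
  note h = inv_powr_le_half[OF a]
  show ?thesis using order.trans[OF conjunct1[OF h] conjunct2[OF h]] .
qed

lemma inv_powr_abs_lt1: "prime (n::nat) \<Longrightarrow> s \<ge> 1 \<Longrightarrow> \<bar>1 / real n powr s\<bar> < 1"
proof -
  assume a: "prime n" "s \<ge> 1"
  have nn: "0 \<le> 1 / real n powr s" by simp
  show ?thesis by (subst abs_of_nonneg[OF nn]) (use inv_powr_half[OF a] in linarith)
qed

lemma summable_inv_sq: "summable (\<lambda>n. 1 / real n ^ 2)"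
  using summable_zeta[of 2] by simp

definition zfac :: "real \<Rightarrow> nat \<Rightarrow> real" where
  "zfac s n = (if prime n then inverse (1 - 1 / real n powr s) else 1)"
definition lfac :: "real \<Rightarrow> nat \<Rightarrow> real" where
  "lfac s n = (if prime n then inverse (1 - chi n * (1 / real n powr s)) else 1)"
definition qi :: "real \<Rightarrow> nat \<Rightarrow> real" where
  "qi s n = (if prime n \<and> (n mod 5 = 2 \<or> n mod 5 = 3) then inverse (1 - (1 / real n powr s)^2)
             else if n = 5 then inverse (1 - 1 / real n powr s) else 1)"
definition pfac :: "real \<Rightarrow> nat \<Rightarrow> real" where
  "pfac s n = (if n \<in> P14 then inverse ((1 - 1 / real n powr s) ^ 2) else 1)"

lemma mult_inv_powr: "1 / real (m * n) powr s = (1 / real m powr s) * (1 / real n powr s)"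
  by (simp add: powr_mult)

lemma zeta_has_prod: "s > 1 \<Longrightarrow> zfac s has_prod Z s"
proof -
  assume s: "s > 1"
  have "(\<lambda>n. if prime n then inverse (1 - 1 / real n powr s) else 1) has_prod (\<Sum>n. 1 / real n powr s)"
  proof (rule euler_product(1))
    show "1 / real (m * n) powr s = 1 / real m powr s * (1 / real n powr s)" for m n by (rule mult_inv_powr)
    show "1 / real 1 powr s = 1" by simp
    show "\<bar>1 / real p powr s\<bar> < 1" if "prime p" for p
      using inv_powr_abs_lt1[OF that] s by simp
    show "summable (\<lambda>n. \<bar>1 / real n powr s\<bar>)" using summable_zeta[OF s] by simp
  qed
  thus ?thesis by (simp add: zfac_def[abs_def] Z_def)
qed

lemma L_has_prod: "s > 1 \<Longrightarrow> lfac s has_prod Lf s \<and> Lf s > 0"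
proof -
  assume s: "s > 1"
  let ?f = "\<lambda>n. chi n * (1 / real n powr s)"
  have a: "?f (m * n) = ?f m * ?f n" for m n by (simp only: chi_mult mult_inv_powr mult_ac)
  have b: "?f 1 = 1" by (simp add: chi_def)
  have c: "\<bar>?f p\<bar> < 1" if "prime p" for p
  proof -
    have h: "\<bar>1 / real p powr s\<bar> < 1" using inv_powr_abs_lt1[OF that] s by simp
    have "\<bar>chi p\<bar> * \<bar>1 / real p powr s\<bar> \<le> 1 * \<bar>1 / real p powr s\<bar>"
      by (rule mult_right_mono[OF chi_abs]) simp
    thus ?thesis using h unfolding abs_mult by linarith
  qed
  have d: "summable (\<lambda>n. \<bar>?f n\<bar>)" by (rule summable_L[OF s])
  show ?thesis using euler_product[OF a b c d] by (simp add: lfac_def[abs_def] Lf_def)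
qed

lemma prime_mod5: "prime (n::nat) \<Longrightarrow> n mod 5 = 0 \<Longrightarrow> n = 5"
proof -
  assume p: "prime n" and m: "n mod 5 = 0"
  have d: "5 dvd n" using m by (simp add: dvd_eq_mod_eq_0)
  have "\<forall>m. m dvd n \<longrightarrow> m = 1 \<or> m = n" using p by (simp add: prime_nat_iff)
  hence "(5::nat) = 1 \<or> 5 = n" using d by blast
  thus "n = 5" by simp
qed

lemma factor_identity:
  assumes s: "s \<ge> 1"
  shows "zfac s n * lfac s n = pfac s n * qi s n"
proof (cases "prime n")
  case False
  hence "n \<noteq> 5" by auto
  thus ?thesis using False by (simp add: zfac_def lfac_def pfac_def qi_def P14_def)
next
  case True
  define x where "x = 1 / real n powr s"
  have x: "0 \<le> x" "x \<le> 1/2" using inv_powr_le_half[OF True s] by (auto simp: x_def)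
  have z: "zfac s n = inverse (1 - x)" using True by (simp add: zfac_def x_def)
  have disj: "n mod 5 = 0 \<or> (n mod 5 = 1 \<or> n mod 5 = 4) \<or> (n mod 5 = 2 \<or> n mod 5 = 3)" by presburger
  have A: ?thesis if m: "n mod 5 = 0"
  proof -
    have n5: "n = 5" using prime_mod5[OF True m] .
    have "chi n = 0" unfolding chi_def using m by simp
    hence l: "lfac s n = 1" using True by (simp add: lfac_def)
    have p: "pfac s n = 1" using m by (simp add: pfac_def P14_def)
    have q: "qi s n = inverse (1 - x)" using m n5 by (simp add: qi_def x_def)
    show ?thesis unfolding z l p q by simp
  qed
  have B: ?thesis if m: "n mod 5 = 1 \<or> n mod 5 = 4"
  proof -
    have "chi n = 1" unfolding chi_def using m by simp
    hence l: "lfac s n = inverse (1 - x)" using True by (simp add: lfac_def x_def)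
    have "n \<in> P14" using m True by (simp add: P14_def)
    hence p: "pfac s n = inverse ((1 - x)^2)" by (simp add: pfac_def x_def)
    have "\<not> (n mod 5 = 2 \<or> n mod 5 = 3)" "n \<noteq> 5" using m by auto
    hence q: "qi s n = 1" by (simp add: qi_def)
    show ?thesis unfolding z l p q by (simp add: power2_eq_square inverse_mult_distrib)
  qed
  have C: ?thesis if m: "n mod 5 = 2 \<or> n mod 5 = 3"
  proof -
    have "\<not> (n mod 5 = 1 \<or> n mod 5 = 4)" using m by auto
    hence "chi n = -1" unfolding chi_def using m by simp
    hence l: "lfac s n = inverse (1 + x)" using True by (simp add: lfac_def x_def)
    have "n \<notin> P14" using m by (auto simp: P14_def)
    hence p: "pfac s n = 1" by (simp add: pfac_def)
    have q: "qi s n = inverse (1 - x^2)" using m True by (simp add: qi_def x_def)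
    have "inverse (1 - x) * inverse (1 + x) = inverse ((1 - x) * (1 + x))" by (simp add: inverse_mult_distrib)
    also have "(1 - x) * (1 + x) = 1 - x^2" by (simp add: power2_eq_square algebra_simps)
    finally show ?thesis unfolding z l p q by simp
  qed
  show ?thesis using disj
  proof (elim disjE)
    assume "n mod 5 = 0" thus ?thesis by (rule A)
  next
    assume "n mod 5 = 1" thus ?thesis by (intro B) simp
  next
    assume "n mod 5 = 4" thus ?thesis by (intro B) simp
  next
    assume "n mod 5 = 2" thus ?thesis by (intro C) simp
  next
    assume "n mod 5 = 3" thus ?thesis by (intro C) simp
  qed
qed

lemma pfac_bound: "s \<ge> 1 \<Longrightarrow> 0 \<le> pfac s n - 1 \<and> pfac s n - 1 \<le> 8 * (1 / real n powr s)"
proof (cases "n \<in> P14")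
  case True
  assume s: "s \<ge> 1"
  have "prime n" using True by (simp add: P14_def)
  from inv_powr_le_half[OF this s] have "0 \<le> 1 / real n powr s" "1 / real n powr s \<le> 1/2" by auto
  from inv2_bound[OF this] show ?thesis using True by (simp add: pfac_def)
qed (simp add: pfac_def)

lemma qi_bound: "s \<ge> 1 \<Longrightarrow> 0 \<le> qi s n - 1 \<and> qi s n - 1 \<le> 2 / real n ^ 2 + (if n = 5 then 1 else 0)"
proof -
  assume s: "s \<ge> 1"
  show ?thesis
  proof (cases "prime n \<and> (n mod 5 = 2 \<or> n mod 5 = 3)")
    case True
    define x where "x = 1 / real n powr s"
    have x: "0 \<le> x" "x \<le> 1 / real n" "1 / real n \<le> 1/2" using inv_powr_le_half[of n s] True s by (auto simp: x_def)
    have "x^2 \<le> (1 / real n)^2" using x by (intro power_mono) auto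
    moreover have "(1 / real n)^2 \<le> (1/2)^2" using x by (intro power_mono) auto
    ultimately have "0 \<le> x^2" "x^2 \<le> 1/2" "2 * x^2 \<le> 2 / real n ^ 2" by (auto simp: power_divide)
    moreover have "n \<noteq> 5" using True by auto
    ultimately show ?thesis using True inv1_bound[of "x^2"] by (simp add: qi_def flip: x_def)
  next
    case False
    show ?thesis
    proof (cases "n = 5")
      case True
      define x where "x = 1 / real n powr s"
      have h: "0 \<le> x" "x \<le> 1/2" using inv_powr_half[of n s] True s by (auto simp: x_def)
      have q: "qi s n = inverse (1 - x)" using True by (simp add: qi_def x_def)
      from inv1_bound[OF h] have "0 \<le> qi s n - 1" "qi s n - 1 \<le> 1" unfolding q using h by linarith+
      moreover have "0 \<le> 2 / real n ^ 2" by simp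
      ultimately show ?thesis using True by simp
    qed (use False in \<open>auto simp add: qi_def\<close>)
  qed
qed

lemma summable_qM: "summable (\<lambda>n. 2 / real n ^ 2 + (if n = 5 then 1 else 0 :: real))"
proof (rule summable_add)
  show "summable (\<lambda>n. 2 / real n ^ 2)" using summable_mult[OF summable_inv_sq, of 2] by simp
  have "(\<lambda>n. if n = 5 then 1 else 0 :: real) = (\<lambda>n. if n \<in> {5} then 1 else 0)" by auto
  thus "summable (\<lambda>n. if n = 5 then 1 else 0 :: real)" by simp
qed

lemma conv_pfac: "s > 1 \<Longrightarrow> convergent_prod (pfac s)"
proof -
  assume s: "s > 1"
  show ?thesis
  proof (rule conv_prod_bound)
    show "summable (\<lambda>n. 8 * (1 / real n powr s))" by (rule summable_mult[OF summable_zeta[OF s]])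
  qed (use pfac_bound s in auto)
qed

lemma conv_qi: "s \<ge> 1 \<Longrightarrow> convergent_prod (qi s)"
  by (rule conv_prod_bound[OF _ _ summable_qM]) (use qi_bound in auto)

lemma qi_ge1: "s \<ge> 1 \<Longrightarrow> qi s n \<ge> 1" using qi_bound[of s n] by auto

definition Qi :: "real \<Rightarrow> real" where "Qi s = (\<Prod>n. qi s n)"

lemma cont_qi: "continuous_on {1..2} (\<lambda>s. qi s n)"
proof (cases "prime n")
  case True
  hence n2: "real n \<ge> 2" using prime_ge_2_nat by auto
  have lt: "1 / real n powr s < 1" if "s \<in> {1..2}" for s
    using inv_powr_le_half[OF True, of s] that by auto
  have lt2: "(1 / real n powr s)^2 < 1" if "s \<in> {1..2}" for s
  proof -
    have "0 \<le> 1 / real n powr s" by simp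
    thus ?thesis using lt[OF that] by (simp add: power_less_one_iff abs_square_less_1)
  qed
  have c1: "continuous_on {1..2} (\<lambda>s. 1 / real n powr s)" using n2 by (intro cont_inv_powr) auto
  have c2: "continuous_on {1..2} (\<lambda>s. inverse (1 - (1 / real n powr s)^2))"
    by (intro continuous_intros c1) (use lt2 in fastforce)
  have c3: "continuous_on {1..2} (\<lambda>s. inverse (1 - 1 / real n powr s))"
    by (intro continuous_intros c1) (use lt in fastforce)
  show ?thesis
  proof (cases "n mod 5 = 2 \<or> n mod 5 = 3")
    case True2: True
    show ?thesis unfolding qi_def using True True2 c2 by simp
  next
    case False2: False
    show ?thesis
    proof (cases "n = 5")
      case True3: True
      show ?thesis unfolding qi_def using True False2 True3 c3 by simp
    next
      case False3: False
      show ?thesis unfolding qi_def using True False2 False3 by simp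
    qed
  qed
next
  case False
  hence "n \<noteq> 5" by auto
  thus ?thesis using False unfolding qi_def by simp
qed

lemma Qi_tendsto: "(Qi \<longlongrightarrow> Qi 1) (at_right 1)"
proof -
  have uc: "uniformly_convergent_on {1..2} (\<lambda>N s. \<Prod>n<N. qi s n)"
  proof (rule uniformly_convergent_on_prod'[OF cont_qi])
    show "compact {1..2::real}" by simp
    show "uniformly_convergent_on {1..2} (\<lambda>N s. \<Sum>n<N. norm (qi s n - 1))"
    proof (rule Weierstrass_m_test'[OF _ summable_qM])
      fix n and s :: real assume "s \<in> {1..2}"
      thus "norm (norm (qi s n - 1)) \<le> 2 / real n ^ 2 + (if n = 5 then 1 else 0)"
        using qi_bound[of s n] by auto
    qed
  qed
  have ul: "uniform_limit {1..2} (\<lambda>N s. \<Prod>n<N. qi s n) (\<lambda>s. \<Prod>n. qi s n) sequentially"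
    by (rule uniform_limit_prodinf[OF uc]) (use qi_ge1 in auto)
  have c: "\<forall>\<^sub>F N in sequentially. continuous_on {1..2} (\<lambda>s. \<Prod>n<N. qi s n)"
    by (intro always_eventually allI continuous_on_prod cont_qi)
  have "continuous_on {1..2} (\<lambda>s. \<Prod>n. qi s n)"
    by (rule uniform_limit_theorem[OF c ul]) simp
  hence "continuous_on {1..2} Qi" by (simp add: Qi_def[abs_def])
  hence "(Qi \<longlongrightarrow> Qi 1) (at 1 within {1..2})" by (simp add: continuous_on_def)
  thus ?thesis using at_within_Icc_at_right[of "1::real" 2] by simp
qed

lemma Qi_ge1: "s \<ge> 1 \<Longrightarrow> Qi s \<ge> 1"
proof -
  assume s: "s \<ge> 1"
  have "(\<lambda>N. \<Prod>n<N. qi s n) \<longlonglongrightarrow> Qi s"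
    unfolding Qi_def by (rule has_prod_imp_tendsto'[OF convergent_prod_has_prod[OF conv_qi[OF s]]])
  moreover have "\<forall>N. 1 \<le> (\<Prod>n<N. qi s n)" using qi_ge1[OF s] by (auto intro: prod_ge_1)
  ultimately show ?thesis by (intro LIMSEQ_le_const) auto
qed


lemma F_eq:
  assumes s: "s > 1"
  shows "prod_P14 (\<lambda>p. inverse ((1 - 1 / real p powr s) ^ 2)) = Z s * Lf s / Qi s"
proof -
  have s1: "s \<ge> 1" using s by simp
  have "(\<lambda>n. zfac s n * lfac s n) has_prod (Z s * Lf s)"
    using has_prod_mult[OF zeta_has_prod[OF s] conjunct1[OF L_has_prod[OF s]]] .
  moreover have "(\<lambda>n. zfac s n * lfac s n) = (\<lambda>n. pfac s n * qi s n)"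
    using factor_identity[OF s1] by (simp add: fun_eq_iff)
  ultimately have h1: "(\<lambda>n. pfac s n * qi s n) has_prod (Z s * Lf s)" by simp
  have h2: "(\<lambda>n. pfac s n * qi s n) has_prod (prodinf (pfac s) * Qi s)"
    unfolding Qi_def
    by (rule has_prod_mult[OF convergent_prod_has_prod[OF conv_pfac[OF s]] convergent_prod_has_prod[OF conv_qi[OF s1]]])
  have e: "prodinf (pfac s) * Qi s = Z s * Lf s" using has_prod_unique2[OF h2 h1] .
  have q: "Qi s \<noteq> 0" using Qi_ge1[OF s1] by simp
  have "prod_P14 (\<lambda>p. inverse ((1 - 1 / real p powr s) ^ 2)) = prodinf (pfac s)"
    unfolding prod_P14_def pfac_def ..
  also have "\<dots> = Z s * Lf s / Qi s" using e q by (simp add: field_simps)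
  finally show ?thesis .
qed

lemma Lf_eq_G: "s > 1 \<Longrightarrow> Lf s = G s"
  using L_eq_blocks unfolding G_def by (simp add: sums_iff)

definition rfac :: "nat \<Rightarrow> real" where
  "rfac n = (if n \<in> P14 then inverse (1 - 1 / real n ^ 2) else 1)"

lemma Z2: "Z 2 = pi^2 / 6"
proof -
  have "(\<lambda>n. 1 / real (Suc n) powr 2) sums (pi^2 / 6)"
    using inverse_squares_sums by (simp add: of_nat_power)
  hence "(\<lambda>n. 1 / real n powr 2) sums (pi^2 / 6 + 1 / real 0 powr 2)"
    by (subst (asm) sums_Suc_iff)
  thus ?thesis unfolding Z_def by (simp add: sums_iff)
qed

lemma rfac_bound: "0 \<le> rfac n - 1 \<and> rfac n - 1 \<le> 2 * (1 / real n ^ 2)"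
proof (cases "n \<in> P14")
  case True
  hence p: "prime n" by (simp add: P14_def)
  have "1 / real n \<le> 1/2" using inv_powr_le_half[OF p, of 1] by simp
  moreover have "0 \<le> 1 / real n" by simp
  ultimately have "(1 / real n)^2 \<le> (1/2)^2" by (intro power_mono)
  hence "1 / real n ^ 2 \<le> 1/2" by (simp add: power_divide)
  from inv1_bound[OF _ this] show ?thesis using True by (simp add: rfac_def)
qed (simp add: rfac_def)

lemma conv_rfac: "convergent_prod rfac"
  by (rule conv_prod_bound[OF _ _ summable_mult[OF summable_inv_sq, of 2]]) (use rfac_bound in auto)

lemma zfac2_identity: "zfac 2 n = rfac n * qi 1 n * (if n = 5 then 5/6 else 1)"
proof (cases "prime n")
  case False
  hence "n \<noteq> 5" "n \<notin> P14" by (auto simp: P14_def)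
  thus ?thesis using False by (simp add: zfac_def rfac_def qi_def)
next
  case True
  have disj: "n mod 5 = 0 \<or> (n mod 5 = 1 \<or> n mod 5 = 4) \<or> (n mod 5 = 2 \<or> n mod 5 = 3)" by presburger
  have A: ?thesis if m: "n mod 5 = 0"
  proof -
    have n5: "n = 5" using prime_mod5[OF True m] .
    have "5 \<notin> P14" by (simp add: P14_def)
    thus ?thesis unfolding n5 using True n5 by (simp add: zfac_def rfac_def qi_def)
  qed
  have B: ?thesis if m: "n mod 5 = 1 \<or> n mod 5 = 4"
  proof -
    have "n \<in> P14" using m True by (simp add: P14_def)
    moreover have "\<not> (n mod 5 = 2 \<or> n mod 5 = 3)" "n \<noteq> 5" using m by auto
    ultimately show ?thesis using True by (simp add: zfac_def rfac_def qi_def)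
  qed
  have C: ?thesis if m: "n mod 5 = 2 \<or> n mod 5 = 3"
  proof -
    have "n \<notin> P14" using m by (auto simp: P14_def)
    moreover have "n \<noteq> 5" using m by auto
    ultimately show ?thesis using True m by (simp add: zfac_def rfac_def qi_def power_divide)
  qed
  show ?thesis using disj
  proof (elim disjE)
    assume "n mod 5 = 0" thus ?thesis by (rule A)
  next
    assume "n mod 5 = 1" thus ?thesis by (intro B) simp
  next
    assume "n mod 5 = 4" thus ?thesis by (intro B) simp
  next
    assume "n mod 5 = 2" thus ?thesis by (intro C) simp
  next
    assume "n mod 5 = 3" thus ?thesis by (intro C) simp
  qed
qed

lemma RQ: "prodinf rfac * Qi 1 * (5/6) = pi^2 / 6"
proof -
  have h1: "(\<lambda>n. rfac n * qi 1 n) has_prod (prodinf rfac * Qi 1)"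
    unfolding Qi_def
    by (rule has_prod_mult[OF convergent_prod_has_prod[OF conv_rfac] convergent_prod_has_prod[OF conv_qi]]) simp
  have h2: "(\<lambda>n. if n = 5 then 5/6 else 1) has_prod (5/6 :: real)"
    using has_prod_single[of 5 "\<lambda>_. 5/6 :: real"] by simp
  have "(\<lambda>n. rfac n * qi 1 n * (if n = 5 then 5/6 else 1)) has_prod (prodinf rfac * Qi 1 * (5/6))"
    by (rule has_prod_mult[OF h1 h2])
  moreover have "(\<lambda>n. rfac n * qi 1 n * (if n = 5 then 5/6 else 1)) = zfac 2"
    using zfac2_identity by (simp add: fun_eq_iff)
  ultimately have "zfac 2 has_prod (prodinf rfac * Qi 1 * (5/6))" by simp
  moreover have "zfac 2 has_prod (pi^2/6)" using zeta_has_prod[of 2] Z2 by simp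
  ultimately show ?thesis using has_prod_unique2 by blast
qed

lemma ln_const: "ln (9 + 4 * sqrt 5) = 3 * ln ((3 + sqrt 5) / 2)"
proof -
  define r :: real where "r = sqrt 5"
  have rr: "r * r = 5" unfolding r_def by (rule sqrt5_sq)
  have "(3 + r)^3 = 27 + 27 * r + 9 * (r * r) + (r * r) * r" by algebra
  also have "\<dots> = 72 + 32 * r" unfolding rr by simp
  finally have c: "(3 + r)^3 = 72 + 32 * r" .
  have "((3 + sqrt 5) / 2) ^ 3 = 9 + 4 * sqrt (5::real)"
    unfolding r_def[symmetric] power_divide c by simp
  hence "ln (9 + 4 * sqrt 5) = ln (((3 + sqrt 5) / 2) ^ 3)" by simp
  also have "\<dots> = 3 * ln ((3 + sqrt 5) / 2)" by (subst ln_realpow) (auto intro: add_pos_nonneg)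
  finally show ?thesis .
qed

theorem mainTheorem7:
  shows "((\<lambda>s::real. (s - 1) * prod_P14 (\<lambda>p. inverse ((1 - 1 / real p powr s) ^ 2)))
          \<longlongrightarrow> sqrt 5 * ln (9 + 4 * sqrt 5) / (3 * pi ^ 2)
              * prod_P14 (\<lambda>p. inverse (1 - 1 / real p ^ 2))) (at_right 1)"
proof -
  have R: "prod_P14 (\<lambda>p. inverse (1 - 1 / real p ^ 2)) = prodinf rfac"
    unfolding prod_P14_def rfac_def ..
  have Q1: "Qi 1 \<ge> 1" by (rule Qi_ge1) simp
  have lim: "((\<lambda>s. ((s - 1) * Z s) * G s / Qi s) \<longlongrightarrow> 1 * G 1 / Qi 1) (at_right 1)"
    using Q1 by (intro tendsto_divide tendsto_mult zeta_limit G_tendsto Qi_tendsto) auto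
  have ev: "\<forall>\<^sub>F s in at_right (1::real). ((s - 1) * Z s) * G s / Qi s
        = (s - 1) * prod_P14 (\<lambda>p. inverse ((1 - 1 / real p powr s) ^ 2))"
    using eventually_at_right_less[of "1::real"]
  proof (rule eventually_mono)
    fix s :: real assume s: "1 < s"
    show "((s - 1) * Z s) * G s / Qi s = (s - 1) * prod_P14 (\<lambda>p. inverse ((1 - 1 / real p powr s) ^ 2))"
      unfolding F_eq[OF s] Lf_eq_G[OF s] by simp
  qed
  have const: "1 * G 1 / Qi 1 = sqrt 5 * ln (9 + 4 * sqrt 5) / (3 * pi ^ 2) * prod_P14 (\<lambda>p. inverse (1 - 1 / real p ^ 2))"
  proof -
    have pi0: "pi^2 \<noteq> 0" by simp
    have q0: "Qi 1 \<noteq> 0" using Q1 by simp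
    have iq: "1 / Qi 1 = 5 * prodinf rfac / pi^2" using RQ q0 pi0 by (simp add: field_simps)
    have "1 * G 1 / Qi 1 = G 1 * (1 / Qi 1)" by simp
    also have "\<dots> = ln ((3 + sqrt 5) / 2) / sqrt 5 * (5 * prodinf rfac / pi^2)" unfolding iq G_1 ..
    also have "\<dots> = sqrt 5 * (3 * ln ((3 + sqrt 5) / 2)) / (3 * pi ^ 2) * prodinf rfac"
      using sqrt5_sq sqrt5_pos pi0 by (simp add: field_simps)
    finally show ?thesis unfolding R ln_const .
  qed
  show ?thesis using Lim_transform_eventually[OF lim ev] unfolding const .
qed


end
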